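(* Let $G=(V,E)$ be a graph and $f:\{0,1\}^V\to\mathbb{R}_{\ge0}$ a nonnegative submodular function (viewed as a function of binary assignments $\overline{X}=\{X_v\}_{v\in V}$) which is a local utility function. Given a legal $c$-coloring of $G$, there exist a randomized distributed algorithm outputting $\overline{X}$ with $E[f(\overline{X})]\ge\frac12\max_{\overline{Y}}f(\overline{Y})$, and a deterministic distributed algorithm outputting $\overline{X}$ with $f(\overline{X})\ge\frac13\max_{\overline{Y}}f(\overline{Y})$, both running in $O(c)$ communication rounds in the CONGEST model.
   Context: Submodular: $f(S)+f(T)\ge f(S\cup T)+f(S\cap T)$ for all $S,T\subseteq V$, identifying a binary assignment with the set of vertices assigned 1. $L_v[\overline{X}]$ is the restriction of an assignment to the neighbours of $v$, passed together with the 1-hop neighbourhood of $v$. $f$ is a local utility function if for every $v$ there is $g_v$ with $f(\overline{X}\cup\{X_v=\alpha\})-f(\overline{X}\cup\{X_v=\alpha'\})=g_v(L_v[\overline{X}],\alpha,\alpha')$ for all $\overline{X}$ and $\alpha,\alpha'\in\{0,1\}$. CONGEST: synchronous rounds, $O(\log n)$-bit messages per edge per round. A legal coloring gives adjacent vertices different colors. *)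

theory Defs
  imports "HOL-Probability.Probability"
begin

text \<open>A (simple undirected) graph on a finite vertex set V of naturals is given by a
symmetric irreflexive adjacency predicate E. A binary assignment is identified with
the set of vertices assigned 1.\<close>

definition graph_on :: "nat set \<Rightarrow> (nat \<Rightarrow> nat \<Rightarrow> bool) \<Rightarrow> bool" where
  "graph_on V E \<longleftrightarrow> finite V \<and> (\<forall>u v. E u v \<longrightarrow> u \<in> V \<and> v \<in> V \<and> u \<noteq> v \<and> E v u)"

definition nbrs_of :: "nat set \<Rightarrow> (nat \<Rightarrow> nat \<Rightarrow> bool) \<Rightarrow> nat \<Rightarrow> nat set" where
  "nbrs_of V E v = {u \<in> V. E v u}"

definition legal_coloring :: "nat set \<Rightarrow> (nat \<Rightarrow> nat \<Rightarrow> bool) \<Rightarrow> nat \<Rightarrow> (nat \<Rightarrow> nat) \<Rightarrow> bool" where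
  "legal_coloring V E c col \<longleftrightarrow> (\<forall>v\<in>V. col v < c) \<and> (\<forall>u v. E u v \<longrightarrow> col u \<noteq> col v)"

definition submodular_on :: "nat set \<Rightarrow> (nat set \<Rightarrow> real) \<Rightarrow> bool" where
  "submodular_on V f \<longleftrightarrow> (\<forall>S T. S \<subseteq> V \<longrightarrow> T \<subseteq> V \<longrightarrow> f S + f T \<ge> f (S \<union> T) + f (S \<inter> T))"

definition set_val :: "nat set \<Rightarrow> nat \<Rightarrow> bool \<Rightarrow> nat set" where
  "set_val X v a = (if a then insert v X else X - {v})"

definition restrict_nbrs :: "nat set \<Rightarrow> (nat \<Rightarrow> nat \<Rightarrow> bool) \<Rightarrow> nat \<Rightarrow> nat set \<Rightarrow> (nat \<Rightarrow> bool)" where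
  "restrict_nbrs V E v X = (\<lambda>u. u \<in> nbrs_of V E v \<and> u \<in> X)"

definition local_utility_via ::
  "nat set \<Rightarrow> (nat \<Rightarrow> nat \<Rightarrow> bool) \<Rightarrow> (nat set \<Rightarrow> real) \<Rightarrow> (nat \<Rightarrow> (nat \<Rightarrow> bool) \<Rightarrow> bool \<Rightarrow> bool \<Rightarrow> real) \<Rightarrow> bool" where
  "local_utility_via V E f g \<longleftrightarrow>
     (\<forall>v\<in>V. \<forall>X. X \<subseteq> V \<longrightarrow> (\<forall>a a'.
        f (set_val X v a) - f (set_val X v a') = g v (restrict_nbrs V E v X) a a'))"

record linp =
  nid :: nat
  nsize :: nat
  ncolors :: nat
  ncolor :: nat
  nnbrs :: "nat set"
  ngfun :: "(nat \<Rightarrow> bool) \<Rightarrow> bool \<Rightarrow> bool \<Rightarrow> real"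

type_synonym history = "(nat \<Rightarrow> bool list) list"

text \<open>The extra local
argument of type 'r is the node's private randomness (unit for deterministic
algorithms). In each round a node sends to each neighbour u the bit string
amsg inp r h u, where h is the list of messages received in previous rounds
(indexed by sender).\<close>
record 'r dalg =
  amsg :: "linp \<Rightarrow> 'r \<Rightarrow> history \<Rightarrow> nat \<Rightarrow> bool list"
  aout :: "linp \<Rightarrow> 'r \<Rightarrow> history \<Rightarrow> bool"

primrec hist :: "'r dalg \<Rightarrow> (nat \<Rightarrow> linp) \<Rightarrow> (nat \<Rightarrow> 'r) \<Rightarrow> nat \<Rightarrow> nat \<Rightarrow> history" where
  "hist A I R 0 = (\<lambda>v. [])"
| "hist A I R (Suc t) = (\<lambda>v. hist A I R t v @
      [\<lambda>u. if u \<in> nnbrs (I v) then amsg A (I u) (R u) (hist A I R t u) v else []])"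

definition congest_ok :: "nat \<Rightarrow> 'r dalg \<Rightarrow> nat set \<Rightarrow> (nat \<Rightarrow> linp) \<Rightarrow> (nat \<Rightarrow> 'r) \<Rightarrow> nat \<Rightarrow> bool" where
  "congest_ok K A V I R T \<longleftrightarrow>
     (\<forall>t<T. \<forall>v\<in>V. \<forall>u\<in>nnbrs (I v).
        real (length (amsg A (I v) (R v) (hist A I R t v) u)) \<le> real K * (1 + log 2 (real (card V))))"

definition output_set :: "'r dalg \<Rightarrow> nat set \<Rightarrow> (nat \<Rightarrow> linp) \<Rightarrow> (nat \<Rightarrow> 'r) \<Rightarrow> nat \<Rightarrow> nat set" where
  "output_set A V I R T = {v \<in> V. aout A (I v) (R v) (hist A I R T v)}"

definition local_inputs ::
  "nat set \<Rightarrow> (nat \<Rightarrow> nat \<Rightarrow> bool) \<Rightarrow> nat \<Rightarrow> (nat \<Rightarrow> nat) \<Rightarrow> (nat \<Rightarrow> (nat \<Rightarrow> bool) \<Rightarrow> bool \<Rightarrow> bool \<Rightarrow> real) \<Rightarrow> nat \<Rightarrow> linp" where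
  "local_inputs V E c col g v =
     \<lparr>nid = v, nsize = card V, ncolors = c, ncolor = col v, nnbrs = nbrs_of V E v, ngfun = g v\<rparr>"

definition rand_space :: "nat set \<Rightarrow> (nat \<Rightarrow> real) measure" where
  "rand_space V = PiM V (\<lambda>_. uniform_measure lborel {0..1::real})"

end

theory Submission
  imports Defs
begin

abbreviation U :: "real measure" where "U \<equiv> uniform_measure lborel {0..1::real}"


definition LXh :: "nat set \<Rightarrow> history \<Rightarrow> nat \<Rightarrow> bool" where
  "LXh N h = (\<lambda>u. u \<in> N \<and> (\<exists>k<length h. (h!k) u = [True]))"
definition LYh :: "nat set \<Rightarrow> history \<Rightarrow> nat \<Rightarrow> bool" where
  "LYh N h = (\<lambda>u. u \<in> N \<and> \<not>(\<exists>k<length h. (h!k) u = [False]))"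
definition dec :: "('r \<Rightarrow> real \<Rightarrow> real \<Rightarrow> bool) \<Rightarrow> linp \<Rightarrow> 'r \<Rightarrow> history \<Rightarrow> bool" where
  "dec rule inp r h = rule r (ngfun inp (LXh (nnbrs inp) h) True False) (ngfun inp (LYh (nnbrs inp) h) False True)"
definition alg :: "('r \<Rightarrow> real \<Rightarrow> real \<Rightarrow> bool) \<Rightarrow> 'r dalg" where
  "alg rule = \<lparr>amsg = (\<lambda>inp r h u. if length h = ncolor inp then [dec rule inp r h] else []),
               aout = (\<lambda>inp r h. dec rule inp r (take (ncolor inp) h))\<rparr>"

lemma hist_len: "length (hist A I R t v) = t"
  by (induction t arbitrary: v) auto

lemma hist_take: "j \<le> t \<Longrightarrow> take j (hist A I R t v) = hist A I R j v"
proof (induction t)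
  case 0 then show ?case by simp
next
  case (Suc t)
  show ?case
  proof (cases "j = Suc t")
    case True then show ?thesis using hist_len[of A I R "Suc t" v] by simp
  next
    case False
    then have "j \<le> t" using Suc by simp
    then show ?thesis using Suc hist_len[of A I R t v] by simp
  qed
qed

lemma hist_nth: "k < t \<Longrightarrow> hist A I R t v ! k =
   (\<lambda>u. if u \<in> nnbrs (I v) then amsg A (I u) (R u) (hist A I R k u) v else [])"
proof (induction t)
  case 0 then show ?case by simp
next
  case (Suc t)
  show ?case
  proof (cases "k < t")
    case True then show ?thesis using Suc hist_len[of A I R t v] by (simp add: nth_append)
  next
    case False
    then have "k = t" using Suc by simp
    then show ?thesis using hist_len[of A I R t v] by (simp add: nth_append del: hist.simps(1)) (simp only: \<open>k = t\<close>)
  qed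
qed

definition pr :: "real \<Rightarrow> real \<Rightarrow> real" where
  "pr a b = (if b \<le> 0 then 1 else if a \<le> 0 then 0 else a / (a + b))"

lemma pr_range: "0 \<le> pr a b" "pr a b \<le> 1"
  by (auto simp: pr_def)

locale DG =
  fixes V :: "nat set" and E :: "nat \<Rightarrow> nat \<Rightarrow> bool" and c :: nat and col :: "nat \<Rightarrow> nat"
    and f :: "nat set \<Rightarrow> real" and g :: "nat \<Rightarrow> (nat \<Rightarrow> bool) \<Rightarrow> bool \<Rightarrow> bool \<Rightarrow> real"
    and rule :: "'r \<Rightarrow> real \<Rightarrow> real \<Rightarrow> bool"
  assumes G: "graph_on V E" and C: "legal_coloring V E c col" and SM: "submodular_on V f"
    and LU: "local_utility_via V E f g"
begin

abbreviation "I \<equiv> local_inputs V E c col g"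

definition Dv :: "(nat \<Rightarrow> 'r) \<Rightarrow> nat \<Rightarrow> bool" where
  "Dv R v = dec rule (I v) (R v) (hist (alg rule) I R (col v) v)"

lemma hist_alg: "k < t \<Longrightarrow> hist (alg rule) I R t v ! k =
   (\<lambda>u. if u \<in> nbrs_of V E v \<and> col u = k then [Dv R u] else [])"
  by (auto simp: hist_nth alg_def local_inputs_def hist_len Dv_def fun_eq_iff)

lemma Dv_eq: "Dv R v = rule (R v)
   (g v (\<lambda>u. u \<in> nbrs_of V E v \<and> col u < col v \<and> Dv R u) True False)
   (g v (\<lambda>u. u \<in> nbrs_of V E v \<and> \<not>(col u < col v \<and> \<not> Dv R u)) False True)"
proof -
  let ?h = "hist (alg rule) I R (col v) v"
  have 1: "LXh (nbrs_of V E v) ?h = (\<lambda>u. u \<in> nbrs_of V E v \<and> col u < col v \<and> Dv R u)"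
    by (auto simp: LXh_def hist_len hist_alg fun_eq_iff split: if_splits)
  have 2: "LYh (nbrs_of V E v) ?h = (\<lambda>u. u \<in> nbrs_of V E v \<and> \<not>(col u < col v \<and> \<not> Dv R u))"
    by (auto simp: LYh_def hist_len hist_alg fun_eq_iff split: if_splits)
  show ?thesis by (subst Dv_def) (simp add: dec_def local_inputs_def 1 2)
qed

lemma output_eq: "output_set (alg rule) V I R c = {v\<in>V. Dv R v}"
proof -
  have "v \<in> V \<Longrightarrow> aout (alg rule) (I v) (R v) (hist (alg rule) I R c v) = Dv R v" for v
    using C unfolding legal_coloring_def
    by (auto simp: alg_def local_inputs_def Dv_def hist_take less_imp_le)
  then show ?thesis unfolding output_set_def by auto
qed

lemma congest: "congest_ok 1 (alg rule) V I R c"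
  unfolding congest_ok_def
proof (intro allI impI ballI)
  fix t v u assume "t < c" "v \<in> V" "u \<in> nnbrs (I v)"
  have "card V \<ge> 1" using G \<open>v \<in> V\<close> unfolding graph_on_def
    by (metis One_nat_def Suc_leI card_gt_0_iff empty_iff)
  then have "log 2 (real (card V)) \<ge> 0" by simp
  moreover have "length (amsg (alg rule) (I v) (R v) (hist (alg rule) I R t v) u) \<le> 1"
    by (simp add: alg_def)
  ultimately show "real (length (amsg (alg rule) (I v) (R v) (hist (alg rule) I R t v) u))
         \<le> real 1 * (1 + log 2 (real (card V)))" by simp
qed


definition St :: "(nat \<Rightarrow> 'r) \<Rightarrow> nat set \<Rightarrow> nat set \<times> nat set" where
  "St R W = ({u\<in>W. Dv R u}, V - {u\<in>W. \<not> Dv R u})"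

definition Af :: "nat \<Rightarrow> nat set \<times> nat set \<Rightarrow> real" where
  "Af w s = f (insert w (fst s)) - f (fst s)"
definition Bf :: "nat \<Rightarrow> nat set \<times> nat set \<Rightarrow> real" where
  "Bf w s = f (snd s - {w}) - f (snd s)"
definition stp :: "nat \<Rightarrow> bool \<Rightarrow> nat set \<times> nat set \<Rightarrow> nat set \<times> nat set" where
  "stp w d s = (if d then (insert w (fst s), snd s) else (fst s, snd s - {w}))"

definition closed :: "nat set \<Rightarrow> bool" where
  "closed W \<longleftrightarrow> W \<subseteq> V \<and> (\<forall>w\<in>W. \<forall>u. E w u \<and> col u < col w \<longrightarrow> u \<in> W)"

lemma closed_V: "closed V"
  using G unfolding closed_def graph_on_def by auto

lemma closed_remove:
  assumes "closed W" "w \<in> W" "\<forall>x\<in>W. col x \<le> col w"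
  shows "closed (W - {w})"
  unfolding closed_def
proof (intro conjI ballI allI impI)
  show "W - {w} \<subseteq> V" using assms(1) unfolding closed_def by blast
  fix x u assume x: "x \<in> W - {w}" and u: "E x u \<and> col u < col x"
  then have "u \<in> W" using assms(1) unfolding closed_def by blast
  moreover have "col x \<le> col w" using assms(3) x by blast
  then have "u \<noteq> w" using u by auto
  ultimately show "u \<in> W - {w}" by blast
qed

lemma closed_induct:
  assumes "closed W" "P {}"
    and step: "\<And>W w. closed W \<Longrightarrow> w \<in> W \<Longrightarrow> \<forall>x\<in>W. col x \<le> col w \<Longrightarrow> closed (W - {w})
          \<Longrightarrow> P (W - {w}) \<Longrightarrow> P W"
  shows "P W"
proof -
  have fin: "finite V" using G unfolding graph_on_def by simp
  have "\<forall>W. closed W \<longrightarrow> card W = n \<longrightarrow> P W" for n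
  proof (induction n)
    case 0
    show ?case proof (intro allI impI)
      fix W assume "closed W" "card W = 0"
      then have "finite W" using fin finite_subset unfolding closed_def by blast
      then have "W = {}" using \<open>card W = 0\<close> by simp
      then show "P W" using assms(2) by simp
    qed
  next
    case (Suc n)
    show ?case proof (intro allI impI)
      fix W assume W: "closed W" "card W = Suc n"
      then have fW: "finite W" "W \<noteq> {}" using fin finite_subset unfolding closed_def by auto
      have "Max (col ` W) \<in> col ` W" using fW by simp
      then obtain w where w1: "w \<in> W" "col w = Max (col ` W)" by (metis imageE)
      have w: "w \<in> W" "\<forall>x\<in>W. col x \<le> col w"
        using w1 fW by auto
      have cl: "closed (W - {w})" using closed_remove W w by blast
      have "card (W - {w}) = n" using W w fW by simp
      then have "P (W - {w})" using Suc cl by blast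
      then show "P W" using step W w cl by blast
    qed
  qed
  then show ?thesis using assms(1) by blast
qed

lemma LU': "v \<in> V \<Longrightarrow> X \<subseteq> V \<Longrightarrow> f (set_val X v a) - f (set_val X v a') = g v (restrict_nbrs V E v X) a a'"
  using LU unfolding local_utility_via_def by simp

lemma Dv_step:
  assumes "closed W" "w \<in> W" "\<forall>x\<in>W. col x \<le> col w"
  shows "Dv R w = rule (R w) (Af w (St R (W - {w}))) (Bf w (St R (W - {w})))"
proof -
  let ?X = "{u\<in>W - {w}. Dv R u}" and ?Y = "V - {u\<in>W - {w}. \<not> Dv R u}"
  have WV: "W \<subseteq> V" "w \<in> V" using assms unfolding closed_def by auto
  have nb: "u \<in> nbrs_of V E w \<Longrightarrow> (col u < col w) = (u \<in> W - {w})" for u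
  proof -
    assume u: "u \<in> nbrs_of V E w"
    then have "E w u" by (simp add: nbrs_of_def)
    then have "col u \<noteq> col w" using C unfolding legal_coloring_def by (metis (mono_tags))
    then show ?thesis using assms \<open>E w u\<close> unfolding closed_def by auto
  qed
  have 1: "(\<lambda>u. u \<in> nbrs_of V E w \<and> col u < col w \<and> Dv R u) = restrict_nbrs V E w ?X"
    unfolding restrict_nbrs_def fun_eq_iff
  proof
    fix u show "(u \<in> nbrs_of V E w \<and> col u < col w \<and> Dv R u) = (u \<in> nbrs_of V E w \<and> u \<in> ?X)"
        using nb[of u] by blast
  qed
  have 2: "(\<lambda>u. u \<in> nbrs_of V E w \<and> \<not>(col u < col w \<and> \<not> Dv R u)) = restrict_nbrs V E w ?Y"
  proof -
    have nbV: "u \<in> nbrs_of V E w \<Longrightarrow> u \<in> V" for u by (simp add: nbrs_of_def)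
    show ?thesis unfolding restrict_nbrs_def fun_eq_iff
    proof
      fix u show "(u \<in> nbrs_of V E w \<and> \<not> (col u < col w \<and> \<not> Dv R u)) = (u \<in> nbrs_of V E w \<and> u \<in> ?Y)"
        using nb[of u] nbV[of u] by blast
    qed
  qed
  have a: "g w (restrict_nbrs V E w ?X) True False = f (insert w ?X) - f ?X"
  proof -
    have XV: "?X \<subseteq> V" using WV by auto
    then have "g w (restrict_nbrs V E w ?X) True False = f (set_val ?X w True) - f (set_val ?X w False)"
      using LU'[OF WV(2) XV] by simp
    moreover have "w \<notin> ?X" by auto
    ultimately show ?thesis by (simp add: set_val_def)
  qed
  have b: "g w (restrict_nbrs V E w ?Y) False True = f (?Y - {w}) - f ?Y"
  proof -
    have XV: "?Y \<subseteq> V" by auto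
    then have "g w (restrict_nbrs V E w ?Y) False True = f (set_val ?Y w False) - f (set_val ?Y w True)"
      using LU'[OF WV(2) XV] by simp
    moreover have "w \<in> ?Y" using WV by auto
    ultimately show ?thesis by (simp add: set_val_def insert_absorb)
  qed
  show ?thesis
    apply (subst Dv_eq)
    unfolding 1 2 a b by (simp add: Af_def Bf_def St_def)
qed

lemma St_step:
  assumes "closed W" "w \<in> W" "\<forall>x\<in>W. col x \<le> col w"
  shows "St R W = stp w (rule (R w) (Af w (St R (W - {w}))) (Bf w (St R (W - {w})))) (St R (W - {w}))"
proof -
  have "w \<in> V" using assms unfolding closed_def by auto
  then show ?thesis
    unfolding Dv_step[OF assms, symmetric] using assms(2)
    by (auto simp: St_def stp_def)
qed

lemma St_inv: "closed W \<Longrightarrow> w \<in> W \<Longrightarrow> fst (St R (W - {w})) \<subseteq> snd (St R (W - {w}))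
   \<and> snd (St R (W - {w})) \<subseteq> V \<and> w \<in> snd (St R (W - {w})) \<and> w \<notin> fst (St R (W - {w})) \<and> w \<in> V"
  unfolding St_def closed_def by auto

lemma St_empty: "St R {} = ({}, V)"
  by (simp add: St_def)

lemma St_V: "St R V = ({v\<in>V. Dv R v}, {v\<in>V. Dv R v})"
  by (auto simp: St_def)

lemma St_sub: "closed W \<Longrightarrow> St R W \<in> Pow V \<times> Pow V"
  unfolding St_def closed_def by blast


lemma SM': "S \<subseteq> V \<Longrightarrow> T \<subseteq> V \<Longrightarrow> f (S \<union> T) + f (S \<inter> T) \<le> f S + f T"
  using SM unfolding submodular_on_def by blast

definition OP :: "nat set \<Rightarrow> nat set \<times> nat set \<Rightarrow> nat set" where
  "OP Op s = (Op \<union> fst s) \<inter> snd s"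

lemma step_facts:
  assumes "X \<subseteq> Y" "Y \<subseteq> V" "w \<in> Y" "w \<notin> X" "Op \<subseteq> V"
  shows "Af w (X,Y) + Bf w (X,Y) \<ge> 0"
    and "w \<in> Op \<Longrightarrow> f (OP Op (stp w True (X,Y))) = f (OP Op (X,Y))"
    and "w \<in> Op \<Longrightarrow> f (OP Op (X,Y)) - f (OP Op (stp w False (X,Y))) \<le> Af w (X,Y)"
    and "w \<notin> Op \<Longrightarrow> f (OP Op (stp w False (X,Y))) = f (OP Op (X,Y))"
    and "w \<notin> Op \<Longrightarrow> f (OP Op (X,Y)) - f (OP Op (stp w True (X,Y))) \<le> Bf w (X,Y)"
proof -
  have 1: "insert w X \<union> (Y - {w}) = Y" "insert w X \<inter> (Y - {w}) = X" using assms by auto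
  have "insert w X \<subseteq> V" "Y - {w} \<subseteq> V" using assms by auto
  from SM'[OF this] show "Af w (X,Y) + Bf w (X,Y) \<ge> 0"
    unfolding 1 by (simp add: Af_def Bf_def)
  show "w \<in> Op \<Longrightarrow> f (OP Op (stp w True (X,Y))) = f (OP Op (X,Y))"
    by (simp add: OP_def stp_def insert_absorb)
  show "w \<notin> Op \<Longrightarrow> f (OP Op (stp w False (X,Y))) = f (OP Op (X,Y))"
  proof -
    assume "w \<notin> Op"
    then have "(Op \<union> X) \<inter> (Y - {w}) = (Op \<union> X) \<inter> Y" using assms(4) by blast
    then show ?thesis by (simp add: OP_def stp_def)
  qed
  assume "w \<in> Op"
  then have 2: "insert w X \<union> ((Op \<union> X) \<inter> (Y - {w})) = (Op \<union> X) \<inter> Y"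
    "insert w X \<inter> ((Op \<union> X) \<inter> (Y - {w})) = X" using assms by auto
  show "f (OP Op (X,Y)) - f (OP Op (stp w False (X,Y))) \<le> Af w (X,Y)"
  proof -
    have "insert w X \<subseteq> V" "(Op \<union> X) \<inter> (Y - {w}) \<subseteq> V" using assms by auto
    from SM'[OF this] show ?thesis unfolding 2 by (simp add: Af_def OP_def stp_def)
  qed
next
  assume "w \<notin> Op"
  have 2: "((Op \<union> insert w X) \<inter> Y) \<union> (Y - {w}) = Y"
    "((Op \<union> insert w X) \<inter> Y) \<inter> (Y - {w}) = (Op \<union> X) \<inter> Y" using assms \<open>w \<notin> Op\<close> by auto
  show "f (OP Op (X,Y)) - f (OP Op (stp w True (X,Y))) \<le> Bf w (X,Y)"
  proof -
    have "(Op \<union> insert w X) \<inter> Y \<subseteq> V" "Y - {w} \<subseteq> V" using assms by auto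
    from SM'[OF this] show ?thesis unfolding 2 by (simp add: Bf_def OP_def stp_def)
  qed
qed

definition Phd :: "nat set \<Rightarrow> nat set \<times> nat set \<Rightarrow> real" where
  "Phd Op s = f (OP Op s) + f (fst s) + f (snd s)"
definition Phr :: "nat set \<Rightarrow> nat set \<times> nat set \<Rightarrow> real" where
  "Phr Op s = f (OP Op s) + (f (fst s) + f (snd s)) / 2"

lemma det_step:
  assumes "fst s \<subseteq> snd s" "snd s \<subseteq> V" "w \<in> snd s" "w \<notin> fst s" "Op \<subseteq> V"
  shows "Phd Op (stp w (Bf w s \<le> Af w s) s) \<ge> Phd Op s"
proof -
  obtain X Y where s: "s = (X,Y)" by fastforce
  note F = step_facts[of X Y w Op, OF assms[unfolded s fst_conv snd_conv]]
  define a where "a = Af w (X,Y)"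
  define b where "b = Bf w (X,Y)"
  have A: "f (insert w X) = f X + a" and B: "f (Y - {w}) = f Y + b"
    by (simp_all add: Af_def Bf_def a_def b_def)
  have e1: "Phd Op (stp w True (X,Y)) = f (OP Op (stp w True (X,Y))) + f X + a + f Y"
    using A by (simp add: Phd_def stp_def)
  have e2: "Phd Op (stp w False (X,Y)) = f (OP Op (stp w False (X,Y))) + f X + f Y + b"
    using B by (simp add: Phd_def stp_def)
  have e0: "Phd Op (X,Y) = f (OP Op (X,Y)) + f X + f Y" by (simp add: Phd_def)
  have ab: "a + b \<ge> 0" using F(1) by (simp add: a_def b_def)
  have "Phd Op (stp w (b \<le> a) (X,Y)) \<ge> Phd Op (X,Y)"
  proof (cases "b \<le> a")
    case True
    then have "stp w (b \<le> a) (X,Y) = stp w True (X,Y)" by simp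
    moreover have "f (OP Op (stp w True (X,Y))) + a \<ge> f (OP Op (X,Y))"
    proof (cases "w \<in> Op")
      case True then show ?thesis using F(2) ab \<open>b \<le> a\<close> by simp
    next
      case False then show ?thesis using F(5) \<open>b \<le> a\<close> by (simp add: b_def)
    qed
    ultimately show ?thesis using e1 e0 by simp
  next
    case False
    then have "stp w (b \<le> a) (X,Y) = stp w False (X,Y)" by simp
    moreover have "f (OP Op (stp w False (X,Y))) + b \<ge> f (OP Op (X,Y))"
    proof (cases "w \<in> Op")
      case True then show ?thesis using F(3) \<open>\<not> b \<le> a\<close> by (simp add: a_def)
    next
      case nF: False then show ?thesis using F(4) ab \<open>\<not> b \<le> a\<close> by simp
    qed
    ultimately show ?thesis using e2 e0 by simp
  qed
  then show ?thesis unfolding s a_def b_def .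
qed

lemma rand_step:
  assumes "fst s \<subseteq> snd s" "snd s \<subseteq> V" "w \<in> snd s" "w \<notin> fst s" "Op \<subseteq> V"
  shows "pr (Af w s) (Bf w s) * Phr Op (stp w True s) + (1 - pr (Af w s) (Bf w s)) * Phr Op (stp w False s) \<ge> Phr Op s"
proof -
  obtain X Y where s: "s = (X,Y)" by fastforce
  note F = step_facts[of X Y w Op, OF assms[unfolded s fst_conv snd_conv]]
  define a where "a = Af w (X,Y)"
  define b where "b = Bf w (X,Y)"
  have A: "f (insert w X) = f X + a" and B: "f (Y - {w}) = f Y + b"
    by (simp_all add: Af_def Bf_def a_def b_def)
  define p where "p = pr a b"
  have ab: "a + b \<ge> 0" using F(1) by (simp add: a_def b_def)
  have key: "p * (f (OP Op (stp w True (X,Y))) - f (OP Op (X,Y)) + a/2)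
       + (1 - p) * (f (OP Op (stp w False (X,Y))) - f (OP Op (X,Y)) + b/2) \<ge> 0"
  proof (cases "w \<in> Op")
    case True
    have d1: "f (OP Op (stp w True (X,Y))) - f (OP Op (X,Y)) = 0" using F(2)[OF True] by simp
    have d2: "f (OP Op (stp w False (X,Y))) - f (OP Op (X,Y)) \<ge> - a" using F(3)[OF True] by (simp add: a_def)
    have p1: "1 - p \<ge> 0" using pr_range[of a b] by (simp add: p_def)
    have "p * (a/2) + (1 - p) * (b/2 - a) \<ge> 0"
    proof (cases "b \<le> 0")
      case True then show ?thesis using ab by (simp add: p_def pr_def)
    next
      case b: False
      show ?thesis
      proof (cases "a \<le> 0")
        case True then show ?thesis using b by (simp add: p_def pr_def)
      next
        case False
        then have pe: "p = a / (a+b)" using b by (simp add: p_def pr_def)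
        have eq: "a * (a/2) + b * (b/2 - a) = (a-b)^2/2"
          by (simp add: power2_eq_square algebra_simps)
        have nn: "a * (a/2) + b * (b/2 - a) \<ge> 0" unfolding eq by simp
        have ab0: "a + b > 0" using b False by simp
        have q: "1 - p = b / (a+b)" unfolding pe using ab0 by (simp add: field_simps)
        have "p * (a/2) + (1 - p) * (b/2 - a) = a / (a+b) * (a/2) + b / (a+b) * (b/2 - a)" unfolding q unfolding pe ..
        also have "\<dots> = (a * (a/2) + b * (b/2 - a)) / (a + b)"
          by (simp add: add_divide_distrib)
        finally have "p * (a/2) + (1 - p) * (b/2 - a) = (a * (a/2) + b * (b/2 - a)) / (a + b)" .
        then show ?thesis using nn ab0 by simp
      qed
    qed
    moreover have "(1 - p) * (f (OP Op (stp w False (X,Y))) - f (OP Op (X,Y)) + b/2) \<ge> (1 - p) * (b/2 - a)"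
      using p1 d2 by (intro mult_left_mono) auto
    ultimately show ?thesis using d1 by simp
  next
    case False
    have d2: "f (OP Op (stp w False (X,Y))) - f (OP Op (X,Y)) = 0" using F(4)[OF False] by simp
    have d1: "f (OP Op (stp w True (X,Y))) - f (OP Op (X,Y)) \<ge> - b" using F(5)[OF False] by (simp add: b_def)
    have p1: "p \<ge> 0" using pr_range[of a b] by (simp add: p_def)
    have "p * (a/2 - b) + (1 - p) * (b/2) \<ge> 0"
    proof (cases "b \<le> 0")
      case True then show ?thesis using ab by (simp add: p_def pr_def)
    next
      case b: False
      show ?thesis
      proof (cases "a \<le> 0")
        case True then show ?thesis using b by (simp add: p_def pr_def)
      next
        case False
        then have pe: "p = a / (a+b)" using b by (simp add: p_def pr_def)
        have eq: "a * (a/2 - b) + b * (b/2) = (a-b)^2/2"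
          by (simp add: power2_eq_square algebra_simps)
        have nn: "a * (a/2 - b) + b * (b/2) \<ge> 0" unfolding eq by simp
        have ab0: "a + b > 0" using b False by simp
        have q: "1 - p = b / (a+b)" unfolding pe using ab0 by (simp add: field_simps)
        have "p * (a/2 - b) + (1 - p) * (b/2) = a / (a+b) * (a/2 - b) + b / (a+b) * (b/2)" unfolding q unfolding pe ..
        also have "\<dots> = (a * (a/2 - b) + b * (b/2)) / (a + b)"
          by (simp add: add_divide_distrib)
        finally have "p * (a/2 - b) + (1 - p) * (b/2) = (a * (a/2 - b) + b * (b/2)) / (a + b)" .
        then show ?thesis using nn ab0 by simp
      qed
    qed
    moreover have "p * (f (OP Op (stp w True (X,Y))) - f (OP Op (X,Y)) + a/2) \<ge> p * (a/2 - b)"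
      using p1 d1 by (intro mult_left_mono) auto
    ultimately show ?thesis using d2 by simp
  qed
  have e1: "Phr Op (stp w True (X,Y)) = f (OP Op (stp w True (X,Y))) + (f X + a + f Y)/2"
    using A by (simp add: Phr_def stp_def)
  have e2: "Phr Op (stp w False (X,Y)) = f (OP Op (stp w False (X,Y))) + (f X + f Y + b)/2"
    using B by (simp add: Phr_def stp_def)
  have e0: "Phr Op (X,Y) = f (OP Op (X,Y)) + (f X + f Y)/2" by (simp add: Phr_def)
  have "p * (f (OP Op (stp w True (X,Y))) + (f X + a + f Y)/2)
      + (1 - p) * (f (OP Op (stp w False (X,Y))) + (f X + f Y + b)/2)
      - (f (OP Op (X,Y)) + (f X + f Y)/2)
      = p * (f (OP Op (stp w True (X,Y))) - f (OP Op (X,Y)) + a/2)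
       + (1 - p) * (f (OP Op (stp w False (X,Y))) - f (OP Op (X,Y)) + b/2)"
    by (simp add: algebra_simps add_divide_distrib diff_divide_distrib)
  then show ?thesis unfolding s e1 e2 e0 p_def[symmetric] a_def[symmetric] b_def[symmetric]
    using key by linarith
qed


lemma St_local:
  assumes "closed W" "\<forall>u\<in>W. R u = R' u"
  shows "St R W = St R' W"
proof -
  have "\<forall>R R'. (\<forall>u\<in>W. R u = R' u) \<longrightarrow> St R W = St R' W"
  proof (rule closed_induct[OF assms(1)])
    show "\<forall>R R'. (\<forall>u\<in>{}. R u = R' u) \<longrightarrow> St R {} = St R' {}" by (simp add: St_empty)
  next
    fix W w assume h: "closed W" "w \<in> W" "\<forall>x\<in>W. col x \<le> col w" "closed (W - {w})"
      and IH: "\<forall>R R'. (\<forall>u\<in>W - {w}. R u = R' u) \<longrightarrow> St R (W - {w}) = St R' (W - {w})"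
    show "\<forall>R R'. (\<forall>u\<in>W. R u = R' u) \<longrightarrow> St R W = St R' W"
    proof (intro allI impI)
      fix R R' :: "nat \<Rightarrow> 'r" assume a: "\<forall>u\<in>W. R u = R' u"
      then have "St R (W - {w}) = St R' (W - {w})" using IH by blast
      moreover have "R w = R' w" using a h(2) by blast
      ultimately show "St R W = St R' W"
        using St_step[OF h(1-3), of R] St_step[OF h(1-3), of R'] by simp
    qed
  qed
  then show ?thesis using assms(2) by blast
qed

lemma det_main:
  assumes "\<And>r a b. rule r a b = (b \<le> a)" "Op \<subseteq> V" "closed W"
  shows "Phd Op (St R W) \<ge> Phd Op ({},V)"
proof (rule closed_induct[OF assms(3)])
  show "Phd Op (St R {}) \<ge> Phd Op ({},V)" by (simp add: St_empty)
next
  fix W w assume h: "closed W" "w \<in> W" "\<forall>x\<in>W. col x \<le> col w" "closed (W - {w})"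
    and IH: "Phd Op (St R (W - {w})) \<ge> Phd Op ({},V)"
  note inv = St_inv[OF h(1,2), of R]
  have "St R W = stp w (Bf w (St R (W - {w})) \<le> Af w (St R (W - {w}))) (St R (W - {w}))"
    using St_step[OF h(1-3), of R] assms(1) by simp
  then have "Phd Op (St R W) \<ge> Phd Op (St R (W - {w}))"
    using det_step[of "St R (W - {w})" w Op] inv assms(2) by simp
  then show "Phd Op (St R W) \<ge> Phd Op ({},V)" using IH by linarith
qed

end

locale DGR = DG V E c col f g "\<lambda>(r::real) a b. r \<le> pr a b" for V E c col f g
begin

lemma U_prob: "prob_space U"
  by (rule prob_space_uniform_measure) auto

lemma PM_prob: "prob_space (PiM J (\<lambda>_. U))"
  by (rule prob_space_PiM) (rule U_prob)

lemma PPS: "product_prob_space (\<lambda>_. U)"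
  by (rule product_prob_spaceI) (rule U_prob)

lemma U_if:
  assumes "0 \<le> p" "p \<le> 1"
  shows "(\<integral>y. (if y \<le> p then a else b) \<partial>U) = p*a + (1-p)*(b::real)"
proof -
  interpret prob_space U by (rule U_prob)
  have e: "(\<lambda>y. (if y \<le> p then a else b)) = (\<lambda>y. b + (a - b) * indicator {..p} y)"
    by (auto simp: indicator_def fun_eq_iff)
  have m: "measure U {..p} = p"
    using assms by (simp add: Int_commute)
  have i0: "integrable U (indicator {..p} :: real \<Rightarrow> real)"
      by (rule integrable_const_bound[where B=1]) auto
  have i1: "integrable U (\<lambda>y. (a - b) * indicator {..p} y)"
    using i0 by simp
  have "(\<integral>y. b + (a - b) * indicator {..p} y \<partial>U) = (\<integral>y. b \<partial>U) + (\<integral>y. (a - b) * indicator {..p} y \<partial>U)"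
    by (rule Bochner_Integration.integral_add) (auto simp: i0)
  also have "\<dots> = b + (a - b) * p" using m by simp
  finally show ?thesis unfolding e by (simp add: algebra_simps)
qed

lemma comp_meas: "w \<in> J \<Longrightarrow> (\<lambda>R. R w) \<in> borel_measurable (PiM J (\<lambda>_. U))"
proof -
  assume "w \<in> J"
  then have "(\<lambda>R. R w) \<in> measurable (PiM J (\<lambda>_. U)) U"
    by (rule measurable_component_singleton)
  moreover have "measurable (PiM J (\<lambda>_. U)) U = measurable (PiM J (\<lambda>_. U)) borel"
    by (rule measurable_cong_sets) auto
  ultimately show ?thesis by simp
qed

lemma St_meas:
  fixes h :: "nat set \<times> nat set \<Rightarrow> real"
  assumes "closed W" "W \<subseteq> J"
  shows "(\<lambda>R. h (St R W)) \<in> borel_measurable (PiM J (\<lambda>_. U))"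
proof -
  have "W \<subseteq> J \<longrightarrow> (\<forall>h::nat set \<times> nat set \<Rightarrow> real. (\<lambda>R. h (St R W)) \<in> borel_measurable (PiM J (\<lambda>_. U)))"
  proof (rule closed_induct[OF assms(1)])
    show "{} \<subseteq> J \<longrightarrow> (\<forall>h::nat set \<times> nat set \<Rightarrow> real. (\<lambda>R. h (St R {})) \<in> borel_measurable (PiM J (\<lambda>_. U)))"
      by (simp add: St_empty)
  next
    fix W w assume hh: "closed W" "w \<in> W" "\<forall>x\<in>W. col x \<le> col w" "closed (W - {w})"
      and IH: "W - {w} \<subseteq> J \<longrightarrow> (\<forall>h::nat set \<times> nat set \<Rightarrow> real. (\<lambda>R. h (St R (W - {w}))) \<in> borel_measurable (PiM J (\<lambda>_. U)))"
    show "W \<subseteq> J \<longrightarrow> (\<forall>h::nat set \<times> nat set \<Rightarrow> real. (\<lambda>R. h (St R W)) \<in> borel_measurable (PiM J (\<lambda>_. U)))"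
    proof (intro impI allI)
      fix h :: "nat set \<times> nat set \<Rightarrow> real"
      assume WJ: "W \<subseteq> J"
      then have IH': "\<And>h::nat set \<times> nat set \<Rightarrow> real. (\<lambda>R. h (St R (W - {w}))) \<in> borel_measurable (PiM J (\<lambda>_. U))"
        using IH by blast
      let ?q = "\<lambda>s. pr (Af w s) (Bf w s)"
      have eq: "(\<lambda>R. h (St R W)) = (\<lambda>R. if R w \<le> ?q (St R (W - {w}))
                then (h \<circ> stp w True) (St R (W - {w})) else (h \<circ> stp w False) (St R (W - {w})))"
        using St_step[OF hh(1-3)] by (simp add: fun_eq_iff)
      have "{R \<in> space (PiM J (\<lambda>_. U)). R w \<le> ?q (St R (W - {w}))} \<in> sets (PiM J (\<lambda>_. U))"
        by (rule borel_measurable_le[OF comp_meas IH']) (use WJ hh(2) in blast)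
      then show "(\<lambda>R. h (St R W)) \<in> borel_measurable (PiM J (\<lambda>_. U))"
        unfolding eq by (intro measurable_If IH')
    qed
  qed
  then show ?thesis using assms(2) by blast
qed

lemma St_integ:
  fixes h :: "nat set \<times> nat set \<Rightarrow> real"
  assumes "closed W" "W \<subseteq> J"
  shows "integrable (PiM J (\<lambda>_. U)) (\<lambda>R. h (St R W))"
proof -
  interpret prob_space "PiM J (\<lambda>_. U)" by (rule PM_prob)
  have fV: "finite V" using G unfolding graph_on_def by simp
  let ?B = "\<Sum>s\<in>Pow V \<times> Pow V. \<bar>h s\<bar>"
  have "\<bar>h (St R W)\<bar> \<le> ?B" for R
    by (rule member_le_sum[where f="\<lambda>s. \<bar>h s\<bar>"]) (use St_sub[OF assms(1)] fV in auto)
  then show ?thesis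
    by (intro integrable_const_bound[where B="?B"] St_meas[OF assms]) auto
qed

lemma rand_main:
  assumes "Op \<subseteq> V" "closed W"
  shows "(\<integral>R. Phr Op (St R W) \<partial>PiM W (\<lambda>_. U)) \<ge> Phr Op ({},V)"
proof (rule closed_induct[OF assms(2)])
  interpret prob_space "PiM {} (\<lambda>_. U)" by (rule PM_prob)
  show "(\<integral>R. Phr Op (St R {}) \<partial>PiM {} (\<lambda>_. U)) \<ge> Phr Op ({},V)"
    by (simp add: St_empty prob_space)
next
  fix W w assume hh: "closed W" "w \<in> W" "\<forall>x\<in>W. col x \<le> col w" "closed (W - {w})"
    and IH: "(\<integral>R. Phr Op (St R (W - {w})) \<partial>PiM (W - {w}) (\<lambda>_. U)) \<ge> Phr Op ({},V)"
  let ?W' = "W - {w}"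
  interpret PP: product_prob_space "\<lambda>_. U" by (rule PPS)
  have fW: "finite ?W'" using hh(1) G finite_subset unfolding closed_def graph_on_def by blast
  have Wi: "insert w ?W' = W" using hh(2) by blast
  let ?q = "\<lambda>s. pr (Af w s) (Bf w s)"
  let ?F = "\<lambda>s. ?q s * Phr Op (stp w True s) + (1 - ?q s) * Phr Op (stp w False s)"
  have "(\<integral>R. Phr Op (St R W) \<partial>PiM W (\<lambda>_. U))
       = (\<integral>x. (\<integral>y. Phr Op (St (x(w:=y)) W) \<partial>U) \<partial>PiM ?W' (\<lambda>_. U))"
  proof -
    have i: "integrable (PiM (insert w ?W') (\<lambda>_. U)) (\<lambda>R. Phr Op (St R W))"
      by (rule St_integ[OF hh(1)]) (use Wi in blast)
    have "w \<notin> ?W'" by blast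
    from PP.product_integral_insert[OF fW this i] show ?thesis unfolding Wi .
  qed
  also have "\<dots> = (\<integral>x. ?F (St x ?W') \<partial>PiM ?W' (\<lambda>_. U))"
  proof (rule Bochner_Integration.integral_cong[OF refl])
    fix x
    have loc: "St (x(w:=y)) ?W' = St x ?W'" for y
      by (rule St_local[OF hh(4)]) simp
    have "(\<lambda>y. Phr Op (St (x(w:=y)) W)) = (\<lambda>y. if y \<le> ?q (St x ?W') then Phr Op (stp w True (St x ?W'))
              else Phr Op (stp w False (St x ?W')))"
      using St_step[OF hh(1-3), of "x(w:=_)"] loc by (simp add: fun_eq_iff)
    then show "(\<integral>y. Phr Op (St (x(w:=y)) W) \<partial>U) = ?F (St x ?W')"
      using U_if[OF pr_range] by simp
  qed
  also have "\<dots> \<ge> (\<integral>x. Phr Op (St x ?W') \<partial>PiM ?W' (\<lambda>_. U))"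
  proof (rule integral_mono)
    show "integrable (PiM ?W' (\<lambda>_. U)) (\<lambda>x. Phr Op (St x ?W'))" by (rule St_integ[OF hh(4)]) simp
    show "integrable (PiM ?W' (\<lambda>_. U)) (\<lambda>x. ?F (St x ?W'))" by (rule St_integ[OF hh(4)]) simp
    fix x show "Phr Op (St x ?W') \<le> ?F (St x ?W')"
      using rand_step[of "St x ?W'" w Op] St_inv[OF hh(1,2), of x] assms(1) by simp
  qed
  finally show "(\<integral>R. Phr Op (St R W) \<partial>PiM W (\<lambda>_. U)) \<ge> Phr Op ({},V)" using IH by linarith
qed

end


theorem mainTheorem7:
  shows
  "(\<exists>(K::nat) (A :: real dalg).
      \<forall>V E c col f g.
        graph_on V E \<and> legal_coloring V E c col \<and>
        (\<forall>S. S \<subseteq> V \<longrightarrow> f S \<ge> 0) \<and> submodular_on V f \<and> local_utility_via V E f g \<longrightarrow>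
        (\<forall>R. congest_ok K A V (local_inputs V E c col g) R (K * c)) \<and>
        (\<integral>R. f (output_set A V (local_inputs V E c col g) R (K * c)) \<partial>rand_space V)
          \<ge> (1/2) * Max (f ` Pow V))
   \<and>
   (\<exists>(K::nat) (A :: unit dalg).
      \<forall>V E c col f g.
        graph_on V E \<and> legal_coloring V E c col \<and>
        (\<forall>S. S \<subseteq> V \<longrightarrow> f S \<ge> 0) \<and> submodular_on V f \<and> local_utility_via V E f g \<longrightarrow>
        congest_ok K A V (local_inputs V E c col g) (\<lambda>_. ()) (K * c) \<and>
        f (output_set A V (local_inputs V E c col g) (\<lambda>_. ()) (K * c))
          \<ge> (1/3) * Max (f ` Pow V))"
proof
  show "\<exists>(K::nat) (A :: real dalg).
      \<forall>V E c col f g.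
        graph_on V E \<and> legal_coloring V E c col \<and>
        (\<forall>S. S \<subseteq> V \<longrightarrow> f S \<ge> 0) \<and> submodular_on V f \<and> local_utility_via V E f g \<longrightarrow>
        (\<forall>R. congest_ok K A V (local_inputs V E c col g) R (K * c)) \<and>
        (\<integral>R. f (output_set A V (local_inputs V E c col g) R (K * c)) \<partial>rand_space V)
          \<ge> (1/2) * Max (f ` Pow V)"
  proof (intro exI[of _ 1] exI[of _ "alg (\<lambda>(r::real) a b. r \<le> pr a b)"] allI impI)
    fix V E c col f g
    assume H: "graph_on V E \<and> legal_coloring V E c col \<and>
        (\<forall>S. S \<subseteq> V \<longrightarrow> f S \<ge> 0) \<and> submodular_on V f \<and> local_utility_via V E f g"
    interpret DGR V E c col f g by unfold_locales (use H in auto)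
    have fV: "finite V" using H unfolding graph_on_def by simp
    have "Max (f ` Pow V) \<in> f ` Pow V" using fV by (intro Max_in) auto
    then obtain Op where Op: "Op \<subseteq> V" "Max (f ` Pow V) = f Op" by auto
    have nn: "f {} \<ge> 0" "f V \<ge> 0" using H by auto
    have e1: "Phr Op ({}, V) \<ge> f Op"
      using nn Op(1) by (simp add: Phr_def OP_def Int_absorb2)
    have e2: "Phr Op (St R V) = 2 * f (output_set (alg (\<lambda>(r::real) a b. r \<le> pr a b)) V (local_inputs V E c col g) R (1 * c))" for R
      by (simp add: St_V output_eq Phr_def OP_def)
    have "(\<integral>R. Phr Op (St R V) \<partial>PiM V (\<lambda>_. U)) \<ge> f Op"
      using rand_main[OF Op(1) closed_V] e1 by linarith
    then have "2 * (\<integral>R. f (output_set (alg (\<lambda>(r::real) a b. r \<le> pr a b)) V (local_inputs V E c col g) R (1 * c)) \<partial>rand_space V) \<ge> f Op"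
      unfolding e2 rand_space_def by simp
    then show "(\<forall>R. congest_ok 1 (alg (\<lambda>(r::real) a b. r \<le> pr a b)) V (local_inputs V E c col g) R (1 * c)) \<and>
        (\<integral>R. f (output_set (alg (\<lambda>(r::real) a b. r \<le> pr a b)) V (local_inputs V E c col g) R (1 * c)) \<partial>rand_space V)
          \<ge> (1/2) * Max (f ` Pow V)"
      using congest Op(2) by simp
  qed
next
  show "\<exists>(K::nat) (A :: unit dalg).
      \<forall>V E c col f g.
        graph_on V E \<and> legal_coloring V E c col \<and>
        (\<forall>S. S \<subseteq> V \<longrightarrow> f S \<ge> 0) \<and> submodular_on V f \<and> local_utility_via V E f g \<longrightarrow>
        congest_ok K A V (local_inputs V E c col g) (\<lambda>_. ()) (K * c) \<and>
        f (output_set A V (local_inputs V E c col g) (\<lambda>_. ()) (K * c))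
          \<ge> (1/3) * Max (f ` Pow V)"
  proof (intro exI[of _ 1] exI[of _ "alg (\<lambda>(r::unit) a b. b \<le> a)"] allI impI)
    fix V E c col f g
    assume H: "graph_on V E \<and> legal_coloring V E c col \<and>
        (\<forall>S. S \<subseteq> V \<longrightarrow> f S \<ge> 0) \<and> submodular_on V f \<and> local_utility_via V E f g"
    interpret DG V E c col f g "\<lambda>(r::unit) a b. b \<le> a" by unfold_locales (use H in auto)
    have fV: "finite V" using H unfolding graph_on_def by simp
    have "Max (f ` Pow V) \<in> f ` Pow V" using fV by (intro Max_in) auto
    then obtain Op where Op: "Op \<subseteq> V" "Max (f ` Pow V) = f Op" by auto
    have nn: "f {} \<ge> 0" "f V \<ge> 0" using H by auto
    have e1: "Phd Op ({}, V) \<ge> f Op"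
      using nn Op(1) by (simp add: Phd_def OP_def Int_absorb2)
    have e2: "Phd Op (St (\<lambda>_. ()) V) = 3 * f (output_set (alg (\<lambda>(r::unit) a b. b \<le> a)) V (local_inputs V E c col g) (\<lambda>_. ()) (1 * c))"
      by (simp add: St_V output_eq Phd_def OP_def)
    have "Phd Op (St (\<lambda>_. ()) V) \<ge> f Op"
      using det_main[OF _ Op(1) closed_V, of "\<lambda>_. ()"] e1 by simp
    then show "congest_ok 1 (alg (\<lambda>(r::unit) a b. b \<le> a)) V (local_inputs V E c col g) (\<lambda>_. ()) (1 * c) \<and>
        f (output_set (alg (\<lambda>(r::unit) a b. b \<le> a)) V (local_inputs V E c col g) (\<lambda>_. ()) (1 * c))
          \<ge> (1/3) * Max (f ` Pow V)"
      using congest Op(2) e2 by simp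
  qed
qed

end
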